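(* Let $K$ and $L$ be positive integers. Consider the $K$-user single-input single-output (SISO) broadcast channel with symbol extension factor $L$ and no channel state information at the transmitter (CSIT), as described in the context. Then the maximum achievable SpAC is $\frac{L-K+1}{L}$; equivalently, the largest achievable number of streams per user is $d = L-K+1$.
   Context: Model: one transmitter and $K$ receivers, each with a single antenna. Over $L$ channel uses (symbol extension factor $L$), receiver $i\in\{1,\dots,K\}$ observes $\mathbf{y}_i = \mathbf{H}_{i,i}\sum_{j=1}^K \mathbf{Q}_j\mathbf{x}_j + \mathbf{n}_i \in \mathbb{C}^{L}$, where $\mathbf{H}_{i,i}\in\mathbb{C}^{L\times L}$ is diagonal with the channel coefficients on the diagonal, $\mathbf{x}_j\in\mathbb{C}^{d}$ is the finite-alphabet symbol vector intended for receiver $j$, $\mathbf{Q}_j\in\mathbb{C}^{L\times d}$ is the precoder for $\mathbf{x}_j$ (of rank $d$), and $\mathbf{n}_i$ is Gaussian noise. No CSIT means the precoders $\mathbf{Q}_1,\dots,\mathbf{Q}_K$ are fixed and may not depend on the channel coefficients. For receiver $i$, the desired-signal subspace is $\mathcal{S}_i=\mathrm{span}(\mathbf{H}_{i,i}\mathbf{Q}_i)$ and the interference subspace is $\mathcal{I}_i=\sum_{j\neq i}\mathrm{span}(\mathbf{H}_{i,i}\mathbf{Q}_j)$ (sum of column spaces). A value $d$ is achievable if there exist such channel-independent precoders such that, for almost every realization of the channel coefficients, for every receiver $i$: (a) $\sum_{j=1}^K \mathrm{span}(\mathbf{H}_{i,i}\mathbf{Q}_j)=\mathbb{C}^{L}$,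 and (b) $\mathcal{S}_i\not\subseteq\mathcal{I}_i$. SpAC (symbols per transmit antenna per channel use) of such a scheme is $d/L$; the maximum achievable SpAC is the maximum of $d/L$ over achievable $d$. *)

theory Defs
  imports "HOL-Probability.Probability" "Jordan_Normal_Form.DL_Rank"
begin

definition colsp :: "nat \<Rightarrow> complex mat \<Rightarrow> complex vec set" where
  "colsp L A = (vec_space.col_space L A :: complex vec set)"

definition subspace_sum :: "nat \<Rightarrow> (nat \<Rightarrow> complex vec set) \<Rightarrow> nat set \<Rightarrow> complex vec set" where
  "subspace_sum L W J =
     {finsum (module_vec TYPE(complex) L) u J | u. \<forall>j\<in>J. u j \<in> W j}"

text \<open>Diagonal channel matrix H_{i,i} over L channel uses; the channel coefficients are
  h (i, t) for receiver i < K and channel use t < L.\<close>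
definition chan_mat :: "nat \<Rightarrow> (nat \<times> nat \<Rightarrow> complex) \<Rightarrow> nat \<Rightarrow> complex mat" where
  "chan_mat L h i = mat L L (\<lambda>(r, c). if r = c then h (i, r) else 0)"

definition chan_measure :: "nat \<Rightarrow> nat \<Rightarrow> (nat \<times> nat \<Rightarrow> complex) measure" where
  "chan_measure K L = PiM ({..<K} \<times> {..<L}) (\<lambda>_. lborel)"

definition achievable :: "nat \<Rightarrow> nat \<Rightarrow> nat \<Rightarrow> bool" where
  "achievable K L d \<longleftrightarrow>
     (\<exists>Q :: nat \<Rightarrow> complex mat.
        (\<forall>j<K. Q j \<in> carrier_mat L d \<and> vec_space.rank L (Q j :: complex mat) = d) \<and>
        (AE h in chan_measure K L.
           \<forall>i<K.
             subspace_sum L (\<lambda>j. colsp L (chan_mat L h i * Q j)) {..<K} = carrier_vec L \<and>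
             \<not> (colsp L (chan_mat L h i * Q i) \<subseteq>
                 subspace_sum L (\<lambda>j. colsp L (chan_mat L h i * Q j)) ({..<K} - {i}))))"

end

theory Submission
  imports Defs
begin

no_notation Finite_Cartesian_Product.vec_nth (infixl "$" 90)


lemma chan_prod: "product_sigma_finite (\<lambda>_::nat\<times>nat. lborel :: complex measure)"
  by (simp add: product_sigma_finite_def sigma_finite_lborel)

lemma AE_nonzero:
  "AE h in chan_measure K L. \<forall>i<K. \<forall>t<L. h (i, t) \<noteq> 0"
proof -
  interpret product_sigma_finite "\<lambda>_::nat\<times>nat. lborel :: complex measure" by (rule chan_prod)
  let ?I = "{..<K} \<times> {..<L}"
  have "AE h in chan_measure K L. \<forall>p\<in>?I. h p \<noteq> 0"
  proof (subst AE_finite_all, simp, intro ballI)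
    fix p assume p: "p \<in> ?I"
    let ?A = "\<lambda>q. if q = p then {0::complex} else UNIV"
    have N: "Pi\<^sub>E ?I ?A \<in> null_sets (chan_measure K L)"
    proof -
      have s: "Pi\<^sub>E ?I ?A \<in> sets (chan_measure K L)"
        unfolding chan_measure_def by (intro sets_PiM_I_finite) auto
      have "emeasure (chan_measure K L) (Pi\<^sub>E ?I ?A) = (\<Prod>q\<in>?I. emeasure lborel (?A q))"
        unfolding chan_measure_def by (intro emeasure_PiM) auto
      also have "\<dots> = 0" using p by (intro prod_zero) (auto intro!: bexI[of _ p])
      finally show ?thesis using s by auto
    qed
    show "AE h in chan_measure K L. h p \<noteq> 0"
      apply (rule AE_I'[OF N])
      using p by (auto simp: chan_measure_def space_PiM PiE_iff extensional_def)
  qed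
  then show ?thesis by eventually_elim auto
qed

lemma AE_exists:
  assumes "0 < K" "0 < L" "AE h in chan_measure K L. P h"
  shows "\<exists>h. P h"
proof -
  interpret product_sigma_finite "\<lambda>_::nat\<times>nat. lborel :: complex measure" by (rule chan_prod)
  let ?I = "{..<K} \<times> {..<L}"
  have sp: "space (chan_measure K L) = Pi\<^sub>E ?I (\<lambda>_. UNIV)"
    by (simp add: chan_measure_def space_PiM)
  have "emeasure (chan_measure K L) (Pi\<^sub>E ?I (\<lambda>_. UNIV)) = (\<Prod>q\<in>?I. emeasure lborel (UNIV::complex set))"
    unfolding chan_measure_def by (intro emeasure_PiM) auto
  also have "\<dots> = \<infinity>" using assms(1,2) by (simp add: ennreal_prod_eq_top)
  finally have ne: "emeasure (chan_measure K L) (space (chan_measure K L)) \<noteq> 0" using sp by simp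
  show ?thesis
  proof (rule ccontr)
    assume "\<not> ?thesis"
    then have "AE h in chan_measure K L. False" using assms(3) by (auto elim: AE_mp)
    then have "ae_filter (chan_measure K L) = bot" by (simp add: trivial_limit_def)
    with ne show False by (simp add: ae_filter_eq_bot_iff)
  qed
qed




lemma finsum_idx_nat:
  fixes u :: "nat \<Rightarrow> complex vec"
  assumes "finite J" "\<forall>j\<in>J. u j \<in> carrier_vec L" "t < L"
  shows "finsum (module_vec TYPE(complex) L) u J $ t = (\<Sum>j\<in>J. u j $ t)"
  using assms
proof (induct J rule: finite_induct)
  case (insert x F)
  interpret vec_space "TYPE(complex)" L .
  have c: "finsum V u F \<in> carrier_vec L" using insert by (intro finsum_closed) auto
  have d: "dim_vec (finsum V u F) = L" using c by simp
  have t: "t < dim_vec (finsum V u F)" unfolding d using insert by simp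
  have "finsum V u (insert x F) = u x + finsum V u F"
    using insert by (intro finsum_insert) auto
  moreover have "(u x + finsum V u F) $ t = u x $ t + finsum V u F $ t"
    by (rule index_add_vec(1)[OF t])
  ultimately show ?case using insert by simp
next
  case empty
  interpret vec_space "TYPE(complex)" L .
  show ?case using empty by simp
qed

definition isub :: "nat \<Rightarrow> complex vec set \<Rightarrow> bool" where
  "isub L W \<longleftrightarrow> W \<subseteq> carrier_vec L \<and> 0\<^sub>v L \<in> W \<and> (\<forall>x\<in>W. \<forall>y\<in>W. x + y \<in> W)
     \<and> (\<forall>c x. x \<in> W \<longrightarrow> c \<cdot>\<^sub>v x \<in> W)"

lemma isub_carr: "isub L W \<Longrightarrow> x \<in> W \<Longrightarrow> x \<in> carrier_vec L" unfolding isub_def by blast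
lemma isub_zero: "isub L W \<Longrightarrow> 0\<^sub>v L \<in> W" unfolding isub_def by blast
lemma isub_add: "isub L W \<Longrightarrow> x \<in> W \<Longrightarrow> y \<in> W \<Longrightarrow> x + y \<in> W" unfolding isub_def by blast
lemma isub_smult: "isub L W \<Longrightarrow> x \<in> W \<Longrightarrow> c \<cdot>\<^sub>v x \<in> W" unfolding isub_def by blast

lemma colsp_eq:
  assumes "A \<in> carrier_mat L nc"
  shows "colsp L A = {y. \<exists>x\<in>carrier_vec nc. A *\<^sub>v x = y}"
proof -
  interpret vec_space "TYPE(complex)" L .
  show ?thesis unfolding colsp_def using col_space_eq[OF assms] assms by auto
qed

lemma isub_colsp:
  assumes "A \<in> carrier_mat L nc"
  shows "isub L (colsp L A)"
  unfolding colsp_eq[OF assms] isub_def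
proof (intro conjI ballI allI impI subsetI)
  show "x \<in> carrier_vec L" if "x \<in> {y. \<exists>x\<in>carrier_vec nc. A *\<^sub>v x = y}" for x
    using that assms by auto
  show "0\<^sub>v L \<in> {y. \<exists>x\<in>carrier_vec nc. A *\<^sub>v x = y}"
    using assms by (auto intro!: bexI[of _ "0\<^sub>v nc"])
  show "x + y \<in> {y. \<exists>x\<in>carrier_vec nc. A *\<^sub>v x = y}"
    if "x \<in> {y. \<exists>x\<in>carrier_vec nc. A *\<^sub>v x = y}" "y \<in> {y. \<exists>x\<in>carrier_vec nc. A *\<^sub>v x = y}" for x y
  proof -
    from that(1) obtain a where "a \<in> carrier_vec nc" "x = A *\<^sub>v a" by blast
    moreover from that(2) obtain b where "b \<in> carrier_vec nc" "y = A *\<^sub>v b" by blast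
    ultimately
    show ?thesis using assms by (auto intro!: bexI[of _ "a + b"] simp: mult_add_distrib_mat_vec)
  qed
  show "c \<cdot>\<^sub>v x \<in> {y. \<exists>x\<in>carrier_vec nc. A *\<^sub>v x = y}"
    if "x \<in> {y. \<exists>x\<in>carrier_vec nc. A *\<^sub>v x = y}" for c x
  proof -
    from that obtain a where "a \<in> carrier_vec nc" "x = A *\<^sub>v a" by blast
    then show ?thesis using assms by (auto intro!: bexI[of _ "c \<cdot>\<^sub>v a"] simp: mult_mat_vec)
  qed
qed

lemma ss_def2:
  "v \<in> subspace_sum L W J \<longleftrightarrow> (\<exists>u. (\<forall>j\<in>J. u j \<in> W j) \<and> v = finsum (module_vec TYPE(complex) L) u J)"
  unfolding subspace_sum_def by auto

lemma ss_carrier: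
  assumes "finite J" "\<forall>j\<in>J. isub L (W j)" "v \<in> subspace_sum L W J"
  shows "v \<in> carrier_vec L"
proof -
  interpret vec_space "TYPE(complex)" L .
  obtain u where u: "\<forall>j\<in>J. u j \<in> W j" "v = finsum V u J" using assms(3) unfolding ss_def2 by auto
  have "u \<in> J \<rightarrow> carrier_vec L" using u assms(2) by (blast intro: isub_carr isub_zero isub_add isub_smult)
  then show ?thesis using u finsum_closed by auto
qed

lemma ss_idx:
  assumes "finite J" "\<forall>j\<in>J. isub L (W j)" "v \<in> subspace_sum L W J" "t < L"
  shows "\<exists>u. (\<forall>j\<in>J. u j \<in> W j) \<and> v $ t = (\<Sum>j\<in>J. u j $ t)"
proof -
  interpret vec_space "TYPE(complex)" L .
  obtain u where u: "\<forall>j\<in>J. u j \<in> W j" "v = finsum V u J" using assms(3) unfolding ss_def2 by auto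
  have "\<forall>j\<in>J. u j \<in> carrier_vec L" using u assms(2) by (blast intro: isub_carr isub_zero isub_add isub_smult)
  then show ?thesis using u finsum_idx_nat[OF assms(1) _ assms(4)] by auto
qed

lemma ss_coord_zero:
  assumes "finite J" "\<forall>j\<in>J. isub L (W j)" "v \<in> subspace_sum L W J" "t < L"
    and "\<forall>j\<in>J. \<forall>w\<in>W j. w $ t = 0"
  shows "v $ t = 0"
  using ss_idx[OF assms(1-4)] assms(5) by auto

lemma ss_eqI:
  assumes "finite J" "\<forall>j\<in>J. isub L (W j)" "\<forall>j\<in>J. u j \<in> W j" "v \<in> carrier_vec L"
    and "\<And>t. t < L \<Longrightarrow> v $ t = (\<Sum>j\<in>J. u j $ t)"
  shows "v \<in> subspace_sum L W J"
proof -
  interpret vec_space "TYPE(complex)" L .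
  have c: "\<forall>j\<in>J. u j \<in> carrier_vec L" using assms(2,3) by (blast intro: isub_carr isub_zero isub_add isub_smult)
  have "u \<in> J \<rightarrow> carrier_vec L" using c by auto
  then have fc: "finsum V u J \<in> carrier_vec L" using finsum_closed by auto
  have "v = finsum V u J"
    by (rule eq_vecI) (use fc assms(4,5) finsum_idx_nat[OF assms(1) c] in auto)
  then show ?thesis unfolding ss_def2 using assms(3) by auto
qed

lemma ss_isub:
  assumes "finite J" "\<forall>j\<in>J. isub L (W j)"
  shows "isub L (subspace_sum L W J)"
  unfolding isub_def
proof (intro conjI ballI allI impI subsetI)
  show "x \<in> carrier_vec L" if "x \<in> subspace_sum L W J" for x using ss_carrier assms that by blast
  show "0\<^sub>v L \<in> subspace_sum L W J"
    apply (rule ss_eqI[OF assms, of "\<lambda>_. 0\<^sub>v L"])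
    using assms isub_zero apply blast
    by auto
  show "x + y \<in> subspace_sum L W J" if xy: "x \<in> subspace_sum L W J" "y \<in> subspace_sum L W J" for x y
  proof -
    have xc: "x \<in> carrier_vec L" "y \<in> carrier_vec L" using ss_carrier assms that by blast+
    interpret vec_space "TYPE(complex)" L .
    obtain u where u: "\<forall>j\<in>J. u j \<in> W j" "x = finsum V u J" using xy(1) unfolding ss_def2 by blast
    obtain u' where u': "\<forall>j\<in>J. u' j \<in> W j" "y = finsum V u' J" using xy(2) unfolding ss_def2 by blast
    have c: "\<forall>j\<in>J. u j \<in> carrier_vec L" "\<forall>j\<in>J. u' j \<in> carrier_vec L"
      using u u' assms(2) by (blast intro: isub_carr)+
    show ?thesis
    proof (rule ss_eqI[OF assms, of "\<lambda>j. u j + u' j"])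
      show "\<forall>j\<in>J. u j + u' j \<in> W j" using u u' assms(2) by (blast intro: isub_carr isub_zero isub_add isub_smult)
      show "x + y \<in> carrier_vec L" using xc by auto
      fix t assume t: "t < L"
      have "(x + y) $ t = x $ t + y $ t" using xc t by auto
      also have "\<dots> = (\<Sum>j\<in>J. u j $ t) + (\<Sum>j\<in>J. u' j $ t)"
        using finsum_idx_nat[OF assms(1) c(1) t] finsum_idx_nat[OF assms(1) c(2) t] u u' by simp
      also have "\<dots> = (\<Sum>j\<in>J. (u j + u' j) $ t)"
      proof -
        have "(\<Sum>j\<in>J. (u j + u' j) $ t) = (\<Sum>j\<in>J. u j $ t + u' j $ t)"
          using c t by (intro sum.cong) auto
        then show ?thesis by (simp add: sum.distrib)
      qed
      finally show "(x + y) $ t = (\<Sum>j\<in>J. (u j + u' j) $ t)" .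
    qed
  qed
  show "c \<cdot>\<^sub>v x \<in> subspace_sum L W J" if xy: "x \<in> subspace_sum L W J" for c x
  proof -
    have xc: "x \<in> carrier_vec L" using ss_carrier assms that by blast
    interpret vec_space "TYPE(complex)" L .
    obtain u where u: "\<forall>j\<in>J. u j \<in> W j" "x = finsum V u J" using xy(1) unfolding ss_def2 by blast
    have cc: "\<forall>j\<in>J. u j \<in> carrier_vec L" using u assms(2) by (blast intro: isub_carr isub_zero isub_add isub_smult)
    show ?thesis
    proof (rule ss_eqI[OF assms, of "\<lambda>j. c \<cdot>\<^sub>v u j"])
      show "\<forall>j\<in>J. c \<cdot>\<^sub>v u j \<in> W j" using u assms(2) by (blast intro: isub_carr isub_zero isub_add isub_smult)
      show "c \<cdot>\<^sub>v x \<in> carrier_vec L" using xc by auto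
      fix t assume t: "t < L"
      have "(c \<cdot>\<^sub>v x) $ t = c * x $ t" using xc t by auto
      also have "\<dots> = c * (\<Sum>j\<in>J. u j $ t)"
        using finsum_idx_nat[OF assms(1) cc t] u by simp
      also have "\<dots> = (\<Sum>j\<in>J. (c \<cdot>\<^sub>v u j) $ t)"
        using cc t by (auto simp: sum_distrib_left intro!: sum.cong)
      finally show "(c \<cdot>\<^sub>v x) $ t = (\<Sum>j\<in>J. (c \<cdot>\<^sub>v u j) $ t)" .
    qed
  qed
qed

lemma ss_mono:
  assumes "finite J'" "J \<subseteq> J'" "\<forall>j\<in>J'. isub L (W j)" "v \<in> subspace_sum L W J"
  shows "v \<in> subspace_sum L W J'"
proof -
  have fJ: "finite J" using assms(1,2) finite_subset by blast
  have vc: "v \<in> carrier_vec L" using ss_carrier[OF fJ _ assms(4)] assms(2,3) by blast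
  interpret vec_space "TYPE(complex)" L .
  obtain u where u: "\<forall>j\<in>J. u j \<in> W j" "v = finsum V u J" using assms(4) unfolding ss_def2 by auto
  have cc: "\<forall>j\<in>J. u j \<in> carrier_vec L" using u assms(2,3) by (blast intro: isub_carr isub_zero isub_add isub_smult)
  show ?thesis
  proof (rule ss_eqI[OF assms(1,3), of "\<lambda>j. if j \<in> J then u j else 0\<^sub>v L"])
    show "\<forall>j\<in>J'. (if j \<in> J then u j else 0\<^sub>v L) \<in> W j" using u assms(3) by (auto intro: isub_zero)
    show "v \<in> carrier_vec L" by fact
    fix t assume t: "t < L"
    have "v $ t = (\<Sum>j\<in>J. u j $ t)" using finsum_idx_nat[OF fJ cc t] u by simp
    also have "\<dots> = (\<Sum>j\<in>J'. (if j \<in> J then u j else 0\<^sub>v L) $ t)"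
      using t assms(1,2) by (intro sum.mono_neutral_cong_left) auto
    finally show "v $ t = (\<Sum>j\<in>J'. (if j \<in> J then u j else 0\<^sub>v L) $ t)" .
  qed
qed

lemma ss_mem:
  assumes "finite J" "j \<in> J" "\<forall>j\<in>J. isub L (W j)" "w \<in> W j"
  shows "w \<in> subspace_sum L W J"
proof -
  have wc: "w \<in> carrier_vec L" using assms by (blast intro: isub_carr isub_zero isub_add isub_smult)
  show ?thesis
  proof (rule ss_eqI[OF assms(1,3), of "\<lambda>k. if k = j then w else 0\<^sub>v L"])
    show "\<forall>k\<in>J. (if k = j then w else 0\<^sub>v L) \<in> W k" using assms by (auto intro: isub_zero)
    show "w \<in> carrier_vec L" by fact
    fix t assume t: "t < L"
    have "(\<Sum>k\<in>J. (if k = j then w else 0\<^sub>v L) $ t) = (\<Sum>k\<in>J. if k = j then w $ t else 0)"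
      using t by (intro sum.cong) auto
    also have "\<dots> = w $ t" using assms(1,2) by simp
    finally show "w $ t = (\<Sum>k\<in>J. (if k = j then w else 0\<^sub>v L) $ t)" by simp
  qed
qed





lemma isub_submodule:
  assumes "isub L N"
  shows "LinearCombinations.submodule class_ring N (module_vec TYPE(complex) L)"
proof -
  interpret vec_space "TYPE(complex)" L .
  show ?thesis
    unfolding LinearCombinations.submodule_def
  proof (intro conjI allI impI)
    show "module class_ring V" by (rule vec_module)
    show "N \<subseteq> carrier V" using assms isub_carr by (simp only: cV) blast
    show "\<zero>\<^bsub>V\<^esub> \<in> N" using isub_zero[OF assms] by simp
    show "v \<oplus>\<^bsub>V\<^esub> w \<in> N" if "v \<in> N" "w \<in> N" for v w using isub_add[OF assms that] by simp
    show "c \<odot>\<^bsub>V\<^esub> v \<in> N" if "c \<in> carrier class_ring" "v \<in> N" for c v using isub_smult[OF assms that(2)] by simp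
  qed
qed

lemma chain:
  assumes W: "\<forall>j<K. isub L (W j)"
   and S: "S \<subseteq> W 0" "\<not> module.lin_dep class_ring (module_vec TYPE(complex) L) S" "card S = d" "finite S"
   and w: "\<forall>i<K. w i \<in> W i \<and> w i \<notin> subspace_sum L W ({..<K} - {i})"
  shows "k < K \<Longrightarrow> \<exists>T. T \<subseteq> carrier_vec L \<and> \<not> module.lin_dep class_ring (module_vec TYPE(complex) L) T
          \<and> card T = d + k \<and> finite T \<and> T \<subseteq> subspace_sum L W {..k}"
proof (induct k)
  case 0
  have "S \<subseteq> subspace_sum L W {..0}"
    using ss_mem[of "{..0::nat}" 0 L W] W S(1) 0 by auto
  moreover have "S \<subseteq> carrier_vec L" using S(1) W 0 isub_carr by blast
  ultimately show ?case using S by (intro exI[of _ S]) auto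
next
  case (Suc k)
  then obtain T where T: "T \<subseteq> carrier_vec L" "\<not> module.lin_dep class_ring (module_vec TYPE(complex) L) T"
    "card T = d + k" "finite T" "T \<subseteq> subspace_sum L W {..k}" by auto
  let ?J = "{..<K} - {Suc k}"
  have WJ: "\<forall>j\<in>?J. isub L (W j)" using W by auto
  have WJ': "\<forall>j\<in>{..Suc k}. isub L (W j)" using W Suc(2) by auto
  have "T \<subseteq> subspace_sum L W ?J"
  proof -
    have "{..k} \<subseteq> ?J" using Suc(2) by auto
    then show ?thesis using T(5) ss_mono[of ?J "{..k}" L W] WJ by blast
  qed
  have wk: "w (Suc k) \<in> W (Suc k)" "w (Suc k) \<notin> subspace_sum L W ?J" using w Suc(2) by auto
  have wc: "w (Suc k) \<in> carrier_vec L" using wk(1) W Suc(2) isub_carr by blast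
  have wsum: "w (Suc k) \<in> subspace_sum L W {..Suc k}"
    using ss_mem[of "{..Suc k}" "Suc k" L W] WJ' wk(1) by auto
  have Tsum: "T \<subseteq> subspace_sum L W {..Suc k}"
    using T(5) ss_mono[of "{..Suc k}" "{..k}" L W] WJ' by auto
  have sm: "LinearCombinations.submodule class_ring (subspace_sum L W ?J) (module_vec TYPE(complex) L)"
    by (rule isub_submodule[OF ss_isub]) (use WJ in auto)
  interpret vec_space "TYPE(complex)" L .
  have sp: "span T \<subseteq> Defs.subspace_sum L W ?J"
    by (rule span_is_subset[OF \<open>T \<subseteq> Defs.subspace_sum L W ?J\<close> sm])
  have nin: "w (Suc k) \<notin> T" using \<open>T \<subseteq> Defs.subspace_sum L W ?J\<close> wk(2) by auto
  have li: "\<not> lin_dep (T \<union> {w (Suc k)})"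
    using lin_dep_iff_in_span[OF T(1) T(2) wc nin] sp wk(2) by auto
  show ?case
    apply (rule exI[of _ "T \<union> {w (Suc k)}"])
    using T li nin wc wsum Tsum by auto
qed

lemma chain_bound:
  assumes "0 < K" and W: "\<forall>j<K. isub L (W j)"
   and S: "S \<subseteq> W 0" "\<not> module.lin_dep class_ring (module_vec TYPE(complex) L) S" "card S = d" "finite S"
   and w: "\<forall>i<K. w i \<in> W i \<and> w i \<notin> subspace_sum L W ({..<K} - {i})"
  shows "d + (K - 1) \<le> L"
proof -
  obtain T where T: "T \<subseteq> carrier_vec L" "\<not> module.lin_dep class_ring (module_vec TYPE(complex) L) T"
     "card T = d + (K - 1)" "finite T"
    using chain[OF W S w, of "K - 1"] assms(1) by auto
  interpret vec_space "TYPE(complex)" L .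
  have "card T \<le> dim" using li_le_dim(2)[OF fin_dim T(1) T(2)] .
  then show ?thesis using T(3) dim_is_n by simp
qed




lemma chan_carrier: "chan_mat L h i \<in> carrier_mat L L"
  by (simp add: chan_mat_def)

lemma chan_mult_vec:
  assumes "v \<in> carrier_vec L" "t < L"
  shows "(chan_mat L h i *\<^sub>v v) $ t = h (i, t) * v $ t"
proof -
  have "(chan_mat L h i *\<^sub>v v) $ t = (\<Sum>k\<in>{0..<L}. (if t = k then h (i, t) else 0) * v $ k)"
    using assms by (simp add: chan_mat_def mult_mat_vec_def scalar_prod_def)
  also have "\<dots> = (\<Sum>k\<in>{0..<L}. if k = t then h (i, t) * v $ k else 0)"
    by (intro sum.cong) auto
  also have "\<dots> = h (i, t) * v $ t" using assms(2) by simp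
  finally show ?thesis .
qed

lemma ss_diag:
  assumes "finite J" "\<forall>j\<in>J. isub L (W j)" "\<forall>j\<in>J. isub L (W' j)"
    and "\<forall>j\<in>J. \<forall>w\<in>W j. chan_mat L h i *\<^sub>v w \<in> W' j" "v \<in> subspace_sum L W J"
  shows "chan_mat L h i *\<^sub>v v \<in> subspace_sum L W' J"
proof -
  have vc: "v \<in> carrier_vec L" using ss_carrier assms(1,2,5) by blast
  obtain u where u: "\<forall>j\<in>J. u j \<in> W j" "v = finsum (module_vec TYPE(complex) L) u J"
    using assms(5) unfolding ss_def2 by blast
  have cc: "\<forall>j\<in>J. u j \<in> carrier_vec L" using u assms(2) by (blast intro: isub_carr)
  show ?thesis
  proof (rule ss_eqI[OF assms(1,3), of "\<lambda>j. chan_mat L h i *\<^sub>v u j"])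
    show "\<forall>j\<in>J. chan_mat L h i *\<^sub>v u j \<in> W' j" using u assms(4) by blast
    show "chan_mat L h i *\<^sub>v v \<in> carrier_vec L" using vc chan_carrier by (metis mult_mat_vec_carrier)
    fix t assume t: "t < L"
    have "(chan_mat L h i *\<^sub>v v) $ t = h (i, t) * v $ t" using chan_mult_vec[OF vc t] .
    also have "\<dots> = h (i, t) * (\<Sum>j\<in>J. u j $ t)" using finsum_idx_nat[OF assms(1) cc t] u by simp
    also have "\<dots> = (\<Sum>j\<in>J. (chan_mat L h i *\<^sub>v u j) $ t)"
      unfolding sum_distrib_left using cc t chan_mult_vec by (intro sum.cong) auto
    finally show "(chan_mat L h i *\<^sub>v v) $ t = (\<Sum>j\<in>J. (chan_mat L h i *\<^sub>v u j) $ t)" .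
  qed
qed

lemma w_exists:
  assumes Q: "\<forall>j<K. Q j \<in> carrier_mat L d" and i: "i < K"
   and b: "\<not> (colsp L (chan_mat L h i * Q i) \<subseteq>
                 subspace_sum L (\<lambda>j. colsp L (chan_mat L h i * Q j)) ({..<K} - {i}))"
  shows "\<exists>w. w \<in> colsp L (Q i) \<and> w \<notin> subspace_sum L (\<lambda>j. colsp L (Q j)) ({..<K} - {i})"
proof -
  let ?H = "chan_mat L h i"
  have Qc: "\<And>j. j < K \<Longrightarrow> Q j \<in> carrier_mat L d" using Q by blast
  have HQ: "\<And>j. j < K \<Longrightarrow> ?H * Q j \<in> carrier_mat L d"
    using Qc chan_carrier mult_carrier_mat by blast
  obtain y where y: "y \<in> colsp L (?H * Q i)"
      "y \<notin> subspace_sum L (\<lambda>j. colsp L (?H * Q j)) ({..<K} - {i})" using b by blast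
  obtain x where x: "x \<in> carrier_vec d" "y = (?H * Q i) *\<^sub>v x"
    using y(1) unfolding colsp_eq[OF HQ[OF i]] by blast
  let ?w = "Q i *\<^sub>v x"
  have "?w \<in> colsp L (Q i)" unfolding colsp_eq[OF Qc[OF i]] using x(1) by blast
  moreover have "?w \<notin> subspace_sum L (\<lambda>j. colsp L (Q j)) ({..<K} - {i})"
  proof
    assume a: "?w \<in> subspace_sum L (\<lambda>j. colsp L (Q j)) ({..<K} - {i})"
    have "?H *\<^sub>v ?w \<in> subspace_sum L (\<lambda>j. colsp L (?H * Q j)) ({..<K} - {i})"
    proof (rule ss_diag[OF _ _ _ _ a])
      show "finite ({..<K} - {i})" by simp
      show "\<forall>j\<in>{..<K} - {i}. isub L (colsp L (Q j))" using isub_colsp[OF Qc] by blast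
      show "\<forall>j\<in>{..<K} - {i}. isub L (colsp L (?H * Q j))" using isub_colsp[OF HQ] by blast
      show "\<forall>j\<in>{..<K} - {i}. \<forall>w\<in>colsp L (Q j). ?H *\<^sub>v w \<in> colsp L (?H * Q j)"
      proof (intro ballI)
        fix j w assume j: "j \<in> {..<K} - {i}" and w: "w \<in> colsp L (Q j)"
        have jK: "j < K" using j by simp
        obtain x' where x': "x' \<in> carrier_vec d" "w = Q j *\<^sub>v x'"
          using w unfolding colsp_eq[OF Qc[OF jK]] by blast
        have "?H *\<^sub>v w = (?H * Q j) *\<^sub>v x'"
          unfolding x'(2) by (rule assoc_mult_mat_vec[symmetric, OF chan_carrier Qc[OF jK] x'(1)])
        then show "?H *\<^sub>v w \<in> colsp L (?H * Q j)" unfolding colsp_eq[OF HQ[OF jK]] using x'(1) by (auto intro!: bexI[of _ x'])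
      qed
    qed
    moreover have "?H *\<^sub>v ?w = y"
      unfolding x(2) by (rule assoc_mult_mat_vec[symmetric, OF chan_carrier Qc[OF i] x(1)])
    ultimately show False using y(2) by simp
  qed
  ultimately show ?thesis by blast
qed

lemma rank_basis:
  assumes A: "A \<in> carrier_mat L d" and r: "vec_space.rank L A = d"
  shows "\<exists>S. S \<subseteq> colsp L A \<and> \<not> module.lin_dep class_ring (module_vec TYPE(complex) L) S
           \<and> card S = d \<and> finite S"
proof -
  interpret vec_space "TYPE(complex)" L .
  have e: "\<not> lin_dep {}" by (simp add: lin_dep_def)
  obtain S where S: "finite S" "maximal S (\<lambda>T. T \<subseteq> set (cols A) \<and> lin_indpt T)"
    using maximal_exists_superset[of "set (cols A)" "\<lambda>T. T \<subseteq> set (cols A) \<and> lin_indpt T" "{}"] e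
    by auto
  have cS: "card S = d" using rank_card_indpt[OF A S(2)] r by simp
  have sub: "S \<subseteq> set (cols A)" "lin_indpt S" using S(2) unfolding maximal_def by auto
  have "set (cols A) \<subseteq> carrier_vec L" using A cols_dim by blast
  then have "set (cols A) \<subseteq> span (set (cols A))" by (rule in_own_span)
  then have "S \<subseteq> colsp L A" using sub(1) unfolding colsp_def col_space_def by auto
  then show ?thesis using sub cS S(1) by auto
qed

lemma upper:
  assumes K: "0 < K" "0 < L" and "achievable K L d"
  shows "d + (K - 1) \<le> L"
proof -
  obtain Q where Q: "\<forall>j<K. Q j \<in> carrier_mat L d \<and> vec_space.rank L (Q j :: complex mat) = d"
    and ae: "AE h in chan_measure K L.
           \<forall>i<K.
             subspace_sum L (\<lambda>j. colsp L (chan_mat L h i * Q j)) {..<K} = carrier_vec L \<and>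
             \<not> (colsp L (chan_mat L h i * Q i) \<subseteq>
                 subspace_sum L (\<lambda>j. colsp L (chan_mat L h i * Q j)) ({..<K} - {i}))"
    using assms(3) unfolding achievable_def by blast
  obtain h where h: "\<forall>i<K. \<not> (colsp L (chan_mat L h i * Q i) \<subseteq>
                 subspace_sum L (\<lambda>j. colsp L (chan_mat L h i * Q j)) ({..<K} - {i}))"
    using AE_exists[OF K ae] by blast
  have "\<forall>i<K. \<exists>w. w \<in> colsp L (Q i) \<and> w \<notin> subspace_sum L (\<lambda>j. colsp L (Q j)) ({..<K} - {i})"
    using w_exists[of K Q L d _ h] Q h by blast
  then obtain w where w: "\<forall>i<K. w i \<in> colsp L (Q i) \<and> w i \<notin> subspace_sum L (\<lambda>j. colsp L (Q j)) ({..<K} - {i})"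
    by metis
  obtain S where S: "S \<subseteq> colsp L (Q 0)" "\<not> module.lin_dep class_ring (module_vec TYPE(complex) L) S"
           "card S = d" "finite S"
    using rank_basis[of "Q 0" L d] Q K(1) by blast
  have W: "\<forall>j<K. isub L (colsp L (Q j))" using Q isub_colsp by blast
  show ?thesis by (rule chain_bound[OF K(1) W S w])
qed




definition Qc :: "nat \<Rightarrow> nat \<Rightarrow> nat \<Rightarrow> complex mat" where
  "Qc L K j = mat L (L - K + 1)
     (\<lambda>(r, c). if (c < L - K \<and> r = c) \<or> (c = L - K \<and> r = L - K + j) then 1 else 0)"

lemma Qc_carrier: "Qc L K j \<in> carrier_mat L (L - K + 1)"
  by (simp add: Qc_def)

lemma Qc_mult:
  assumes "x \<in> carrier_vec (L - K + 1)" "r < L"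
  shows "(Qc L K j *\<^sub>v x) $ r =
    (if r < L - K then x $ r else if r = L - K + j then x $ (L - K) else 0)"
proof -
  let ?p = "L - K"
  have "(Qc L K j *\<^sub>v x) $ r = (\<Sum>c\<in>{0..<?p+1}.
      (if (c < ?p \<and> r = c) \<or> (c = ?p \<and> r = ?p + j) then 1 else 0) * x $ c)"
    using assms by (simp add: Qc_def mult_mat_vec_def scalar_prod_def)
  also have "\<dots> = (if r < ?p then x $ r else if r = ?p + j then x $ ?p else 0)"
  proof (cases "r < ?p")
    case True
    have "(\<Sum>c\<in>{0..<?p+1}. (if (c < ?p \<and> r = c) \<or> (c = ?p \<and> r = ?p + j) then 1 else 0) * x $ c)
        = (\<Sum>c\<in>{0..<?p+1}. if c = r then x $ c else 0)"
      using True by (intro sum.cong) auto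
    then show ?thesis using True by simp
  next
    case False
    show ?thesis
    proof (cases "r = ?p + j")
      case True
      have "(\<Sum>c\<in>{0..<?p+1}. (if (c < ?p \<and> r = c) \<or> (c = ?p \<and> r = ?p + j) then 1 else 0) * x $ c)
          = (\<Sum>c\<in>{0..<?p+1}. if c = ?p then x $ c else 0)"
        using True by (intro sum.cong) auto
      then show ?thesis using True False by simp
    next
      case F2: False
      have "(\<Sum>c\<in>{0..<?p+1}. (if (c < ?p \<and> r = c) \<or> (c = ?p \<and> r = ?p + j) then 1 else 0) * x $ c)
          = (\<Sum>c\<in>{0..<?p+1}. 0)"
        using False F2 by (intro sum.cong) auto
      then show ?thesis using False F2 by simp
    qed
  qed
  finally show ?thesis .
qed

lemma Qc_rank:
  assumes "K \<le> L" "j < K"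
  shows "vec_space.rank L (Qc L K j) = L - K + 1"
proof -
  interpret vec_space "TYPE(complex)" L .
  let ?p = "L - K" and ?Q = "Qc L K j"
  have Qc: "?Q \<in> carrier_mat L (?p + 1)" using Qc_carrier by simp
  have dist: "distinct (cols ?Q)"
  proof (subst distinct_conv_nth, intro allI impI)
    fix a b assume a: "a < length (cols ?Q)" and b: "b < length (cols ?Q)" and ab: "a \<noteq> b"
    have a': "a < ?p + 1" and b': "b < ?p + 1" using a b Qc by auto
    let ?r = "if a < ?p then a else ?p + j"
    have r: "?r < L" using a' assms by auto
    have "cols ?Q ! a $ ?r = 1" using a' r by (auto simp: Qc_def)
    moreover have "cols ?Q ! b $ ?r = 0" using a' b' r ab by (auto simp: Qc_def)
    ultimately show "cols ?Q ! a \<noteq> cols ?Q ! b" by auto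
  qed
  have li: "\<not> lin_dep (set (cols ?Q))"
  proof
    assume "lin_dep (set (cols ?Q))"
    then obtain v where v: "v \<in> carrier_vec (?p + 1)" "v \<noteq> 0\<^sub>v (?p + 1)" "?Q *\<^sub>v v = 0\<^sub>v L"
      using lin_depE[OF Qc _ dist] by blast
    have "v = 0\<^sub>v (?p + 1)"
    proof (rule eq_vecI)
      show "dim_vec v = dim_vec (0\<^sub>v (?p + 1))" using v(1) by simp
      fix c assume "c < dim_vec (0\<^sub>v (?p + 1))"
      then have c: "c < ?p + 1" by simp
      show "v $ c = 0\<^sub>v (?p + 1) $ c"
      proof (cases "c < ?p")
        case True
        have "(?Q *\<^sub>v v) $ c = v $ c" using Qc_mult[OF v(1), of c j] True assms by auto
        then show ?thesis using v(3) True c assms by simp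
      next
        case False
        then have cp: "c = ?p" using c by simp
        have "(?Q *\<^sub>v v) $ (?p + j) = v $ ?p" using Qc_mult[OF v(1), of "?p + j" j] assms by auto
        then show ?thesis using v(3) cp c assms by simp
      qed
    qed
    then show False using v(2) by simp
  qed
  show ?thesis using lin_indpt_full_rank[OF Qc dist li] by simp
qed

lemma HQc_mult:
  assumes "x \<in> carrier_vec (L - K + 1)" "t < L"
  shows "((chan_mat L h i * Qc L K j) *\<^sub>v x) $ t =
    h (i, t) * (if t < L - K then x $ t else if t = L - K + j then x $ (L - K) else 0)"
proof -
  have "(chan_mat L h i * Qc L K j) *\<^sub>v x = chan_mat L h i *\<^sub>v (Qc L K j *\<^sub>v x)"
    by (rule assoc_mult_mat_vec[OF chan_carrier Qc_carrier assms(1)])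
  moreover have "Qc L K j *\<^sub>v x \<in> carrier_vec L" using Qc_carrier assms(1) by (metis mult_mat_vec_carrier)
  ultimately show ?thesis using chan_mult_vec Qc_mult[OF assms] assms(2) by simp
qed




lemma prop_a:
  assumes KL: "K \<le> L" "0 < K" and i: "i < K" and hnz: "\<forall>t<L. h (i, t) \<noteq> 0"
  shows "subspace_sum L (\<lambda>j. colsp L (chan_mat L h i * Qc L K j)) {..<K} = carrier_vec L"
proof -
  let ?p = "L - K" and ?W = "\<lambda>j. colsp L (chan_mat L h i * Qc L K j)"
  have HQ: "\<And>j. chan_mat L h i * Qc L K j \<in> carrier_mat L (?p + 1)"
    using chan_carrier Qc_carrier mult_carrier_mat by (metis Suc_eq_plus1)
  have W: "\<forall>j\<in>{..<K}. isub L (?W j)" using isub_colsp[OF HQ] by blast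
  show ?thesis
  proof
    show "subspace_sum L ?W {..<K} \<subseteq> carrier_vec L" using ss_carrier[OF _ W] by blast
    show "carrier_vec L \<subseteq> subspace_sum L ?W {..<K}"
    proof
      fix v :: "complex vec" assume v: "v \<in> carrier_vec L"
      define u where "u j = vec L (\<lambda>t. if (j = 0 \<and> t \<le> ?p) \<or> (0 < j \<and> t = ?p + j) then v $ t else 0)" for j
      show "v \<in> subspace_sum L ?W {..<K}"
      proof (rule ss_eqI[OF _ W, of u])
        show "finite {..<K}" by simp
        show "v \<in> carrier_vec L" by fact
        show "\<forall>j\<in>{..<K}. u j \<in> ?W j"
        proof
          fix j assume j: "j \<in> {..<K}"
          define x where "x = vec (?p + 1) (\<lambda>c. if c < ?p then (if j = 0 then v $ c / h (i, c) else 0)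
                                                else v $ (?p + j) / h (i, ?p + j))"
          have xc: "x \<in> carrier_vec (?p + 1)" by (simp add: x_def)
          have "(chan_mat L h i * Qc L K j) *\<^sub>v x = u j"
          proof (rule eq_vecI)
            show "dim_vec ((chan_mat L h i * Qc L K j) *\<^sub>v x) = dim_vec (u j)"
              using chan_carrier[of L h i] by (simp add: u_def)
            fix t assume "t < dim_vec (u j)"
            then have t: "t < L" by (simp add: u_def)
            have jK: "j < K" using j by simp
            have e: "((chan_mat L h i * Qc L K j) *\<^sub>v x) $ t =
                h (i, t) * (if t < ?p then x $ t else if t = ?p + j then x $ ?p else 0)"
              using HQc_mult[OF _ t] xc by simp
            have hz: "h (i, t) \<noteq> 0" using hnz t by simp
            show "((chan_mat L h i * Qc L K j) *\<^sub>v x) $ t = u j $ t"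
              unfolding e using hz t jK KL by (auto simp: x_def u_def)
          qed
          then show "u j \<in> ?W j" unfolding colsp_eq[OF HQ] using xc by (auto intro!: bexI[of _ x])
        qed
        fix t assume t: "t < L"
        define j0 where "j0 = (if t \<le> ?p then 0 else t - ?p)"
        have j0: "j0 < K" using t KL by (auto simp: j0_def)
        have "(\<Sum>j\<in>{..<K}. u j $ t) = (\<Sum>j\<in>{..<K}. if j = j0 then v $ t else 0)"
        proof (intro sum.cong refl)
          fix j assume "j \<in> {..<K}"
          have "((j = 0 \<and> t \<le> ?p) \<or> (0 < j \<and> t = ?p + j)) \<longleftrightarrow> j = j0"
            using t KL by (auto simp: j0_def)
          then show "u j $ t = (if j = j0 then v $ t else 0)" using t by (simp add: u_def)
        qed
        also have "\<dots> = v $ t" using j0 by simp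
        finally show "v $ t = (\<Sum>j\<in>{..<K}. u j $ t)" by simp
      qed
    qed
  qed
qed

lemma prop_b:
  assumes KL: "K \<le> L" "0 < K" and i: "i < K" and hnz: "\<forall>t<L. h (i, t) \<noteq> 0"
  shows "\<not> (colsp L (chan_mat L h i * Qc L K i) \<subseteq>
             subspace_sum L (\<lambda>j. colsp L (chan_mat L h i * Qc L K j)) ({..<K} - {i}))"
proof
  let ?p = "L - K" and ?W = "\<lambda>j. colsp L (chan_mat L h i * Qc L K j)"
  assume sub: "?W i \<subseteq> subspace_sum L ?W ({..<K} - {i})"
  have HQ: "\<And>j. chan_mat L h i * Qc L K j \<in> carrier_mat L (?p + 1)"
    using chan_carrier Qc_carrier mult_carrier_mat by (metis Suc_eq_plus1)
  have W: "\<forall>j\<in>{..<K} - {i}. isub L (?W j)" using isub_colsp[OF HQ] by blast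
  define x :: "complex vec" where "x = vec (?p + 1) (\<lambda>c. if c = ?p then 1 else 0)"
  have xc: "x \<in> carrier_vec (?p + 1)" by (simp add: x_def)
  let ?y = "(chan_mat L h i * Qc L K i) *\<^sub>v x"
  have ti: "?p + i < L" using i KL by simp
  have "?y \<in> ?W i" unfolding colsp_eq[OF HQ] using xc by auto
  then have ys: "?y \<in> subspace_sum L ?W ({..<K} - {i})" using sub by blast
  have "?y $ (?p + i) = 0"
  proof (rule ss_coord_zero[OF _ W ys ti])
    show "finite ({..<K} - {i})" by simp
    show "\<forall>j\<in>{..<K} - {i}. \<forall>w\<in>?W j. w $ (?p + i) = 0"
    proof (intro ballI)
      fix j w assume j: "j \<in> {..<K} - {i}" and w: "w \<in> ?W j"
      obtain x' where x': "x' \<in> carrier_vec (?p + 1)" "w = (chan_mat L h i * Qc L K j) *\<^sub>v x'"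
        using w unfolding colsp_eq[OF HQ] by blast
      show "w $ (?p + i) = 0" unfolding x'(2) using HQc_mult[OF _ ti] x'(1) j by simp
    qed
  qed
  moreover have "?y $ (?p + i) = h (i, ?p + i)"
    using HQc_mult[OF _ ti] xc by (simp add: x_def)
  ultimately show False using hnz ti by simp
qed

lemma lower:
  assumes KL: "K \<le> L" "0 < K"
  shows "achievable K L (L - K + 1)"
  unfolding achievable_def
proof (intro exI[of _ "Qc L K"] conjI allI impI)
  fix j assume "j < K"
  then show "Qc L K j \<in> carrier_mat L (L - K + 1)" "vec_space.rank L (Qc L K j) = L - K + 1"
    using Qc_carrier Qc_rank KL by auto
next
  show "AE h in chan_measure K L.
           \<forall>i<K.
             subspace_sum L (\<lambda>j. colsp L (chan_mat L h i * Qc L K j)) {..<K} = carrier_vec L \<and>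
             \<not> (colsp L (chan_mat L h i * Qc L K i) \<subseteq>
                 subspace_sum L (\<lambda>j. colsp L (chan_mat L h i * Qc L K j)) ({..<K} - {i}))"
    using AE_nonzero[of K L]
    by eventually_elim (use prop_a prop_b KL in auto)
qed

theorem theorem1:
  fixes K L :: nat
  assumes "0 < K" and "0 < L" and "K \<le> L"
  shows "achievable K L (L - K + 1) \<and>
         (\<forall>d. achievable K L d \<longrightarrow> real d / real L \<le> real (L - K + 1) / real L)"
proof (intro conjI allI impI)
  show "achievable K L (L - K + 1)" using lower assms by auto
  fix d assume "achievable K L d"
  then have "d + (K - 1) \<le> L" using upper assms by blast
  then have "d \<le> L - K + 1" using assms by linarith
  then have "real d \<le> real (L - K + 1)" by simp
  then show "real d / real L \<le> real (L - K + 1) / real L"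
    by (simp add: divide_right_mono)
qed


end
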